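(* Let $X$ be a finite nonempty set, $Y$ a nonempty compact metric space, and $u:X\times Y\to\mathbb{R}$ such that $y\mapsto u(x,y)$ is continuous for each $x\in X$. Run the Combinatorial-Continuous Double Oracle (CCDO) procedure with tolerance $\epsilon\ge 0$. Then: (1) If $\epsilon = 0$ and the procedure runs for infinitely many iterations, then for every subsequence of the subgame equilibria $\{(p_k^*,q_k^* )\}$ that converges weakly to some $(p^*,q^* )\in\Delta_X\times\Delta_Y$ (i.e. $p_k^*\Rightarrow p^*$, $q_k^*\Rightarrow q^*$ along the subsequence), the limit $(p^*,q^* )$ is a mixed Nash equilibrium of the whole game. (2) If $\epsilon>0$, the procedure terminates after finitely many iterations and its output $(p_k^*,q_k^* )$ is an $\epsilon$-equilibrium of the whole game.
   Context: Game: Player 1 picks $x\in X$, Player 2 picks $y\in Y$; Player 1 receives $u(x,y)$, Player 2 receives $-u(x,y)$. $\Delta_X$ is the set of probability vectors on $X$, $\Delta_Y$ the set of Borel probability measures on $Y$, and $U(p,q)=\sum_{x} p(x)\int_Y u(x,y)\,dq(y)$; pure strategies are identified with point masses. $(p^*,q^* )$ is a mixed Nash equilibrium if $U(p,q^* )\le U(p^*,q^* )\le U(p^*,q)$ for all $p\in\Delta_X,q\in\Delta_Y$, and an $\epsilon$-equilibrium if $U(p,q^* )-\epsilon\le U(p^*,q^* )\le U(p^*,q)+\epsilon$ for all such $p,q$. Weak convergence $q_k\Rightarrow q$ means $\int f\,dq_k\to\int f\,dq$ for all bounded continuous $f$ on $Y$; on $X$ it is coordinatewise convergence. Best response sets: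 $\mathbb{BR}_1(q)=\arg\max_{x\in X}U(x,q)$, $\mathbb{BR}_2(p)=\arg\min_{y\in Y}U(p,y)$. CCDO procedure: start from nonempty finite sets $X_1\subseteq X$, $Y_1\subseteq Y$. At iteration $k$: compute a mixed Nash equilibrium $(p_k^*,q_k^* )$ of the finite subgame $\langle X_k, Y_k, u\rangle$ (viewed as mixed strategies of the whole game supported on $X_k$, $Y_k$); choose $x_{k+1}\in\mathbb{BR}_1(q_k^* )$ and $y_{k+1}\in\mathbb{BR}_2(p_k^* )$; set $X_{k+1}=X_k\cup\{x_{k+1}\}$, $Y_{k+1}=Y_k\cup\{y_{k+1}\}$; stop and output $(p_k^*,q_k^* )$ if $U(x_{k+1},q_k^* )-U(p_k^*,y_{k+1})\le\epsilon$, otherwise continue. *)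

theory Defs
  imports "HOL-Probability.Probability"
begin

definition mixed1 :: "'a set \<Rightarrow> ('a \<Rightarrow> real) set" where
  "mixed1 X = {p. (\<forall>x\<in>X. 0 \<le> p x) \<and> (\<forall>x. x \<notin> X \<longrightarrow> p x = 0) \<and> sum p X = 1}"

definition mixed2 :: "'b::metric_space set \<Rightarrow> 'b measure set" where
  "mixed2 Y = {q. prob_space q \<and> sets q = sets (restrict_space borel Y)}"

definition payoff :: "'a set \<Rightarrow> ('a \<Rightarrow> 'b \<Rightarrow> real) \<Rightarrow> ('a \<Rightarrow> real) \<Rightarrow> 'b measure \<Rightarrow> real" where
  "payoff X u p q = (\<Sum>x\<in>X. p x * (\<integral>y. u x y \<partial>q))"

definition pure1 :: "'a \<Rightarrow> ('a \<Rightarrow> real)" where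
  "pure1 x = (\<lambda>x'. if x' = x then 1 else 0)"

definition pure2 :: "'b::metric_space set \<Rightarrow> 'b \<Rightarrow> 'b measure" where
  "pure2 Y y = return (restrict_space borel Y) y"

definition mixed_NE :: "'a set \<Rightarrow> 'b::metric_space set \<Rightarrow> ('a \<Rightarrow> 'b \<Rightarrow> real) \<Rightarrow> ('a \<Rightarrow> real) \<Rightarrow> 'b measure \<Rightarrow> bool" where
  "mixed_NE X Y u p q \<longleftrightarrow> p \<in> mixed1 X \<and> q \<in> mixed2 Y \<and>
     (\<forall>p'\<in>mixed1 X. \<forall>q'\<in>mixed2 Y. payoff X u p' q \<le> payoff X u p q \<and> payoff X u p q \<le> payoff X u p q')"

definition eps_NE :: "'a set \<Rightarrow> 'b::metric_space set \<Rightarrow> ('a \<Rightarrow> 'b \<Rightarrow> real) \<Rightarrow> real \<Rightarrow> ('a \<Rightarrow> real) \<Rightarrow> 'b measure \<Rightarrow> bool" where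
  "eps_NE X Y u \<epsilon> p q \<longleftrightarrow> p \<in> mixed1 X \<and> q \<in> mixed2 Y \<and>
     (\<forall>p'\<in>mixed1 X. \<forall>q'\<in>mixed2 Y. payoff X u p' q - \<epsilon> \<le> payoff X u p q \<and> payoff X u p q \<le> payoff X u p q' + \<epsilon>)"

text \<open>Equilibrium of the finite subgame on Xk, Yk, viewed as mixed strategies of the whole
 game supported on Xk and Yk.\<close>
definition subgame_NE :: "'a set \<Rightarrow> 'b::metric_space set \<Rightarrow> ('a \<Rightarrow> 'b \<Rightarrow> real) \<Rightarrow> 'a set \<Rightarrow> 'b set \<Rightarrow> ('a \<Rightarrow> real) \<Rightarrow> 'b measure \<Rightarrow> bool" where
  "subgame_NE X Y u Xk Yk p q \<longleftrightarrow>
     p \<in> mixed1 X \<and> (\<forall>x. x \<notin> Xk \<longrightarrow> p x = 0) \<and>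
     q \<in> mixed2 Y \<and> emeasure q Yk = 1 \<and>
     (\<forall>p'\<in>mixed1 X. \<forall>q'\<in>mixed2 Y. (\<forall>x. x \<notin> Xk \<longrightarrow> p' x = 0) \<longrightarrow> emeasure q' Yk = 1 \<longrightarrow>
        payoff X u p' q \<le> payoff X u p q \<and> payoff X u p q \<le> payoff X u p q')"

definition BR1 :: "'a set \<Rightarrow> ('a \<Rightarrow> 'b \<Rightarrow> real) \<Rightarrow> 'b measure \<Rightarrow> 'a set" where
  "BR1 X u q = {x\<in>X. \<forall>x'\<in>X. payoff X u (pure1 x') q \<le> payoff X u (pure1 x) q}"

definition BR2 :: "'a set \<Rightarrow> 'b::metric_space set \<Rightarrow> ('a \<Rightarrow> 'b \<Rightarrow> real) \<Rightarrow> ('a \<Rightarrow> real) \<Rightarrow> 'b set" where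
  "BR2 X Y u p = {y\<in>Y. \<forall>y'\<in>Y. payoff X u p (pure2 Y y) \<le> payoff X u p (pure2 Y y')}"

definition weak_conv :: "'b::metric_space set \<Rightarrow> (nat \<Rightarrow> 'b measure) \<Rightarrow> 'b measure \<Rightarrow> bool" where
  "weak_conv Y qs q \<longleftrightarrow> (\<forall>f :: 'b \<Rightarrow> real. continuous_on Y f \<and> bounded (f ` Y) \<longrightarrow>
     (\<lambda>k. \<integral>y. f y \<partial>(qs k)) \<longlonglongrightarrow> (\<integral>y. f y \<partial>q))"

definition ccdo_init :: "'a set \<Rightarrow> 'b set \<Rightarrow> (nat \<Rightarrow> 'a set) \<Rightarrow> (nat \<Rightarrow> 'b set) \<Rightarrow> bool" where
  "ccdo_init X Y Xs Ys \<longleftrightarrow> finite (Xs 0) \<and> Xs 0 \<noteq> {} \<and> Xs 0 \<subseteq> X \<and>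
      finite (Ys 0) \<and> Ys 0 \<noteq> {} \<and> Ys 0 \<subseteq> Y"

definition ccdo_step :: "'a set \<Rightarrow> 'b::metric_space set \<Rightarrow> ('a \<Rightarrow> 'b \<Rightarrow> real) \<Rightarrow>
    (nat \<Rightarrow> 'a set) \<Rightarrow> (nat \<Rightarrow> 'b set) \<Rightarrow> (nat \<Rightarrow> 'a \<Rightarrow> real) \<Rightarrow> (nat \<Rightarrow> 'b measure) \<Rightarrow>
    (nat \<Rightarrow> 'a) \<Rightarrow> (nat \<Rightarrow> 'b) \<Rightarrow> nat \<Rightarrow> bool" where
  "ccdo_step X Y u Xs Ys P Q xs ys k \<longleftrightarrow>
     subgame_NE X Y u (Xs k) (Ys k) (P k) (Q k) \<and>
     xs (Suc k) \<in> BR1 X u (Q k) \<and> ys (Suc k) \<in> BR2 X Y u (P k) \<and>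
     Xs (Suc k) = Xs k \<union> {xs (Suc k)} \<and> Ys (Suc k) = Ys k \<union> {ys (Suc k)}"

definition ccdo_stop :: "'a set \<Rightarrow> 'b::metric_space set \<Rightarrow> ('a \<Rightarrow> 'b \<Rightarrow> real) \<Rightarrow> real \<Rightarrow>
    (nat \<Rightarrow> 'a \<Rightarrow> real) \<Rightarrow> (nat \<Rightarrow> 'b measure) \<Rightarrow> (nat \<Rightarrow> 'a) \<Rightarrow> (nat \<Rightarrow> 'b) \<Rightarrow> nat \<Rightarrow> bool" where
  "ccdo_stop X Y u \<epsilon> P Q xs ys k \<longleftrightarrow>
     payoff X u (pure1 (xs (Suc k))) (Q k) - payoff X u (P k) (pure2 Y (ys (Suc k))) \<le> \<epsilon>"

end

theory Submission
  imports Defs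
begin


definition Wf :: "'a set \<Rightarrow> ('a \<Rightarrow> 'b \<Rightarrow> real) \<Rightarrow> ('a \<Rightarrow> real) \<Rightarrow> 'b \<Rightarrow> real" where
  "Wf X u p y = (\<Sum>x\<in>X. p x * u x y)"

locale game =
  fixes X :: "'a set" and Y :: "'b::metric_space set" and u :: "'a \<Rightarrow> 'b \<Rightarrow> real"
  assumes fin: "finite X" and cpt: "compact Y" and cont: "\<forall>x\<in>X. continuous_on Y (u x)"
begin

lemma mixed2_D:
  assumes "q \<in> mixed2 Y"
  shows "space q = Y" "prob_space q" "sets q = sets (restrict_space borel Y)"
  using assms unfolding mixed2_def
  by (auto dest!: sets_eq_imp_space_eq simp: space_restrict_space)

lemma meas:
  assumes "x \<in> X" "q \<in> mixed2 Y"
  shows "u x \<in> borel_measurable q"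
proof -
  have "u x \<in> borel_measurable (restrict_space borel Y)"
    using cont assms(1) by (intro borel_measurable_continuous_on_restrict) auto
  then show ?thesis using measurable_cong_sets[OF mixed2_D(3)[OF assms(2)] refl] by blast
qed

lemma bound: "\<exists>B>0. \<forall>x\<in>X. \<forall>y\<in>Y. \<bar>u x y\<bar> \<le> B"
proof -
  have "bounded (\<Union>x\<in>X. u x ` Y)"
    using fin cont cpt by (intro bounded_UN) (auto intro!: compact_imp_bounded compact_continuous_image)
  then obtain B where "B > 0" "\<forall>z\<in>(\<Union>x\<in>X. u x ` Y). norm z \<le> B" by (auto simp: bounded_pos)
  then show ?thesis by auto
qed

lemma integrable:
  assumes "x \<in> X" "q \<in> mixed2 Y"
  shows "integrable q (u x)"
proof -
  obtain B where B: "\<forall>x\<in>X. \<forall>y\<in>Y. \<bar>u x y\<bar> \<le> B" using bound by auto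
  interpret prob_space q using mixed2_D assms by auto
  show ?thesis
    by (rule integrable_const_bound[of _ B]) (use B assms mixed2_D meas in auto)
qed

lemma payoff_int:
  assumes "q \<in> mixed2 Y"
  shows "payoff X u p q = (\<integral>y. Wf X u p y \<partial>q)"
proof -
  have "(\<integral>y. (\<Sum>x\<in>X. p x * u x y) \<partial>q) = (\<Sum>x\<in>X. (\<integral>y. p x * u x y \<partial>q))"
    by (rule Bochner_Integration.integral_sum) (auto intro!: integrable_mult_right integrable assms)
  then show ?thesis unfolding payoff_def Wf_def by simp
qed

lemma sets_fin:
  assumes "A \<subseteq> Y" "finite A"
  shows "A \<in> sets (restrict_space borel Y)"
proof -
  have "closed A" using assms(2) by (simp add: finite_imp_closed)
  then have "A \<in> sets borel" by (rule borel_closed)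
  then have "Y \<inter> A \<in> (\<inter>) Y ` sets borel" by blast
  then show ?thesis using assms(1) by (simp add: sets_restrict_space Int_absorb1)
qed

lemma pure2_mixed:
  assumes "y \<in> Y"
  shows "pure2 Y y \<in> mixed2 Y"
  using assms unfolding pure2_def mixed2_def
  by (auto intro!: prob_space_return simp: space_restrict_space)

lemma pure2_emeasure:
  assumes "A \<subseteq> Y" "finite A" "y \<in> A"
  shows "emeasure (pure2 Y y) A = 1"
  unfolding pure2_def using sets_fin[OF assms(1,2)] assms(3) by simp

lemma payoff_pure2:
  assumes "y \<in> Y"
  shows "payoff X u p (pure2 Y y) = Wf X u p y"
proof -
  have "payoff X u p (pure2 Y y) = (\<Sum>x\<in>X. p x * u x y)"
    unfolding payoff_def pure2_def
    by (intro sum.cong refl arg_cong2[where f="(*)"] integral_return)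
       (use assms cont in \<open>auto simp: space_restrict_space intro!: borel_measurable_continuous_on_restrict\<close>)
  then show ?thesis by (simp add: Wf_def)
qed

lemma pure1_mixed: "x \<in> X \<Longrightarrow> pure1 x \<in> mixed1 X"
  unfolding mixed1_def pure1_def using fin by auto

lemma payoff_pure1: "x \<in> X \<Longrightarrow> payoff X u (pure1 x) q = (\<integral>y. u x y \<partial>q)"
proof -
  assume x: "x \<in> X"
  have "payoff X u (pure1 x) q = (\<Sum>xa\<in>X. if xa = x then (\<integral>y. u xa y \<partial>q) else 0)"
    unfolding payoff_def by (rule sum.cong) (auto simp: pure1_def)
  then show ?thesis using x fin by simp
qed

lemma payoff_expand: "payoff X u p q = (\<Sum>x\<in>X. p x * payoff X u (pure1 x) q)"
  unfolding payoff_def using payoff_pure1 by (simp add: payoff_def)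

lemma convex_le:
  assumes "p \<in> mixed1 X" "\<forall>x\<in>X. payoff X u (pure1 x) q \<le> c"
  shows "payoff X u p q \<le> c"
proof -
  have "payoff X u p q = (\<Sum>x\<in>X. p x * payoff X u (pure1 x) q)" by (rule payoff_expand)
  also have "\<dots> \<le> (\<Sum>x\<in>X. p x * c)"
    using assms by (intro sum_mono mult_left_mono) (auto simp: mixed1_def)
  also have "\<dots> = c" using assms(1) by (simp add: mixed1_def flip: sum_distrib_right)
  finally show ?thesis .
qed

lemma convex_ge:
  assumes "p \<in> mixed1 X" "\<forall>x\<in>X. c \<le> payoff X u (pure1 x) q"
  shows "c \<le> payoff X u p q"
proof -
  have "c = (\<Sum>x\<in>X. p x * c)" using assms(1) by (simp add: mixed1_def flip: sum_distrib_right)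
  also have "\<dots> \<le> (\<Sum>x\<in>X. p x * payoff X u (pure1 x) q)"
    using assms by (intro sum_mono mult_left_mono) (auto simp: mixed1_def)
  also have "\<dots> = payoff X u p q" by (rule payoff_expand[symmetric])
  finally show ?thesis .
qed

lemma Wf_meas:
  assumes "q \<in> mixed2 Y"
  shows "integrable q (Wf X u p)"
  unfolding Wf_def using assms by (auto intro!: integrable_sum integrable_mult_right integrable)

lemma meas_ge:
  assumes "q \<in> mixed2 Y" "\<forall>y\<in>Y. c \<le> Wf X u p y"
  shows "c \<le> payoff X u p q"
proof -
  interpret prob_space q using mixed2_D assms by auto
  show ?thesis unfolding payoff_int[OF assms(1)]
    by (rule integral_ge_const) (use Wf_meas assms mixed2_D in auto)
qed

lemma meas_le:
  assumes "q \<in> mixed2 Y" "\<forall>y\<in>Y. Wf X u p y \<le> c"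
  shows "payoff X u p q \<le> c"
proof -
  interpret prob_space q using mixed2_D assms by auto
  show ?thesis unfolding payoff_int[OF assms(1)]
    by (rule integral_le_const) (use Wf_meas assms mixed2_D in auto)
qed

lemma Wf_diff:
  assumes "\<forall>x\<in>X. \<forall>y\<in>Y. \<bar>u x y\<bar> \<le> B" "y \<in> Y"
  shows "\<bar>Wf X u p y - Wf X u p' y\<bar> \<le> B * (\<Sum>x\<in>X. \<bar>p x - p' x\<bar>)"
proof -
  have "\<bar>Wf X u p y - Wf X u p' y\<bar> = \<bar>\<Sum>x\<in>X. (p x - p' x) * u x y\<bar>"
    unfolding Wf_def by (simp add: sum_subtractf left_diff_distrib)
  also have "\<dots> \<le> (\<Sum>x\<in>X. \<bar>(p x - p' x) * u x y\<bar>)" by (rule sum_abs)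
  also have "\<dots> \<le> (\<Sum>x\<in>X. \<bar>p x - p' x\<bar> * B)"
    using assms by (intro sum_mono) (auto simp: abs_mult intro!: mult_left_mono)
  finally show ?thesis by (simp add: sum_distrib_left mult.commute)
qed

lemma Wf_bound:
  assumes "\<forall>x\<in>X. \<forall>y\<in>Y. \<bar>u x y\<bar> \<le> B" "y \<in> Y" "p \<in> mixed1 X"
  shows "\<bar>Wf X u p y\<bar> \<le> B"
proof -
  have "\<bar>Wf X u p y\<bar> \<le> (\<Sum>x\<in>X. \<bar>p x * u x y\<bar>)" unfolding Wf_def by (rule sum_abs)
  also have "\<dots> \<le> (\<Sum>x\<in>X. p x * B)"
    using assms by (intro sum_mono) (auto simp: abs_mult mixed1_def intro!: mult_left_mono)
  also have "\<dots> = B" using assms(3) by (simp add: mixed1_def flip: sum_distrib_right)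
  finally show ?thesis .
qed

end


lemma subseq_conv:
  fixes P :: "nat \<Rightarrow> 'a \<Rightarrow> real"
  assumes "finite S" "\<forall>k. \<forall>x\<in>S. P k x \<in> {0..1}"
  shows "\<exists>r p. strict_mono r \<and> (\<forall>x\<in>S. (\<lambda>k. P (r k) x) \<longlonglongrightarrow> p x)"
  using assms
proof (induction S rule: finite_induct)
  case empty
  show ?case by (rule exI[of _ id]) (auto simp: strict_mono_def)
next
  case (insert a S)
  then obtain r p where r: "strict_mono r" "\<forall>x\<in>S. (\<lambda>k. P (r k) x) \<longlonglongrightarrow> p x" by auto
  have "seq_compact {0..1::real}" by (rule compact_imp_seq_compact) simp
  moreover have "\<forall>k. P (r k) a \<in> {0..1}" using insert.prems by auto
  ultimately obtain l r' where r': "strict_mono r'" "((\<lambda>k. P (r k) a) \<circ> r') \<longlonglongrightarrow> l"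
    by (rule seq_compactE)
  have "strict_mono (r \<circ> r')" using r(1) r'(1) by (rule strict_mono_o)
  moreover have "\<forall>x\<in>insert a S. (\<lambda>k. P ((r \<circ> r') k) x) \<longlonglongrightarrow> (p(a:=l)) x"
  proof
    fix x assume "x \<in> insert a S"
    then show "(\<lambda>k. P ((r \<circ> r') k) x) \<longlonglongrightarrow> (p(a:=l)) x"
    proof
      assume "x = a" then show ?thesis using r'(2) by (simp add: comp_def)
    next
      assume "x \<in> S"
      then have "x \<noteq> a" using insert.hyps by auto
      have "((\<lambda>k. P (r k) x) \<circ> r') \<longlonglongrightarrow> p x"
        using LIMSEQ_subseq_LIMSEQ r(2) \<open>x \<in> S\<close> r'(1) by blast
      then show ?thesis using \<open>x \<noteq> a\<close> by (simp add: comp_def)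
    qed
  qed
  ultimately show ?case by blast
qed

locale run = game X Y u
  for X :: "'a set" and Y :: "'b::metric_space set" and u :: "'a \<Rightarrow> 'b \<Rightarrow> real" +
  fixes Xs Ys P Q xs ys
  assumes init: "ccdo_init X Y Xs Ys"
    and steps: "\<And>k. ccdo_step X Y u Xs Ys P Q xs ys k"
begin

lemma stepD:
  "subgame_NE X Y u (Xs k) (Ys k) (P k) (Q k)"
  "xs (Suc k) \<in> BR1 X u (Q k)" "ys (Suc k) \<in> BR2 X Y u (P k)"
  "Xs (Suc k) = Xs k \<union> {xs (Suc k)}" "Ys (Suc k) = Ys k \<union> {ys (Suc k)}"
  using steps[of k] unfolding ccdo_step_def by auto

lemma PQ: "P k \<in> mixed1 X" "Q k \<in> mixed2 Y"
  using stepD(1)[of k] unfolding subgame_NE_def by auto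

lemma subs: "Xs k \<subseteq> X \<and> finite (Xs k) \<and> Ys k \<subseteq> Y \<and> finite (Ys k)"
proof (induction k)
  case 0 then show ?case using init by (simp add: ccdo_init_def)
next
  case (Suc k)
  have "xs (Suc k) \<in> X" "ys (Suc k) \<in> Y"
    using stepD(2,3)[of k] by (auto simp: BR1_def BR2_def)
  then show ?case using Suc stepD(4,5)[of k] by auto
qed

lemma monoY: "i \<le> j \<Longrightarrow> Ys i \<subseteq> Ys j"
  by (rule lift_Suc_mono_le[of Ys]) (use stepD(5) in auto)

lemma monoX: "i \<le> j \<Longrightarrow> Xs i \<subseteq> Xs j"
  by (rule lift_Suc_mono_le[of Xs]) (use stepD(4) in auto)

lemma ys_in: "i < k \<Longrightarrow> ys (Suc i) \<in> Ys k"
  using monoY[of "Suc i" k] stepD(5)[of i] by auto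

lemma stab: "\<exists>K0. \<forall>k\<ge>K0. xs (Suc k) \<in> Xs k"
proof -
  define c where "c k = card (Xs k)" for k
  have cb: "c k \<le> card X" for k unfolding c_def by (rule card_mono[OF fin]) (use subs[of k] in blast)
  have fr: "finite (range c)" by (rule finite_subset[of _ "{..card X}"]) (use cb in auto)
  obtain K0 where K0: "c K0 = Max (range c)" using Max_in[OF fr] by auto
  have cmono: "i \<le> j \<Longrightarrow> c i \<le> c j" for i j unfolding c_def by (rule card_mono) (use subs[of j] monoX[of i j] in blast)+
  show ?thesis
  proof (intro exI allI impI)
    fix k assume "K0 \<le> k"
    show "xs (Suc k) \<in> Xs k"
    proof (rule ccontr)
      assume "xs (Suc k) \<notin> Xs k"
      then have "c (Suc k) = Suc (c k)" unfolding c_def using stepD(4)[of k] subs[of k] by simp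
      moreover have "c (Suc k) \<le> c K0" using K0 fr by simp
      moreover have "c K0 \<le> c k" using cmono \<open>K0 \<le> k\<close> by auto
      ultimately show False by simp
    qed
  qed
qed

lemma NEk:
  "\<And>p'. p' \<in> mixed1 X \<Longrightarrow> (\<forall>x. x \<notin> Xs k \<longrightarrow> p' x = 0) \<Longrightarrow> payoff X u p' (Q k) \<le> payoff X u (P k) (Q k)"
  "\<And>q'. q' \<in> mixed2 Y \<Longrightarrow> emeasure q' (Ys k) = 1 \<Longrightarrow> payoff X u (P k) (Q k) \<le> payoff X u (P k) q'"
  using stepD(1)[of k] PQ[of k] unfolding subgame_NE_def by auto

lemma BR1D: "xs (Suc k) \<in> X" "\<forall>x\<in>X. payoff X u (pure1 x) (Q k) \<le> payoff X u (pure1 (xs (Suc k))) (Q k)"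
  using stepD(2)[of k] unfolding BR1_def by auto

lemma BR2D: "ys (Suc k) \<in> Y" "\<forall>y\<in>Y. Wf X u (P k) (ys (Suc k)) \<le> Wf X u (P k) y"
  using stepD(3)[of k] unfolding BR2_def by (auto simp: payoff_pure2)

lemma factA:
  assumes "xs (Suc k) \<in> Xs k"
  shows "\<forall>x\<in>X. payoff X u (pure1 x) (Q k) \<le> payoff X u (P k) (Q k)"
proof -
  have "payoff X u (pure1 (xs (Suc k))) (Q k) \<le> payoff X u (P k) (Q k)"
    using assms by (intro NEk(1) pure1_mixed BR1D) (auto simp: pure1_def)
  then show ?thesis using BR1D(2)[of k] by force
qed

lemma factB:
  assumes "y \<in> Ys k"
  shows "payoff X u (P k) (Q k) \<le> Wf X u (P k) y"
proof -
  have yY: "y \<in> Y" using assms subs[of k] by blast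
  have "payoff X u (P k) (Q k) \<le> payoff X u (P k) (pure2 Y y)"
    using assms subs[of k] by (intro NEk(2) pure2_mixed pure2_emeasure yY) auto
  then show ?thesis using payoff_pure2[OF yY] by simp
qed

end


context run begin

lemma dlim:
  assumes "\<forall>x\<in>X. (\<lambda>k. P (r k) x) \<longlonglongrightarrow> p x"
  shows "(\<lambda>k. \<Sum>x\<in>X. \<bar>P (r k) x - p x\<bar>) \<longlonglongrightarrow> 0"
proof -
  have "(\<lambda>k. \<Sum>x\<in>X. \<bar>P (r k) x - p x\<bar>) \<longlonglongrightarrow> (\<Sum>x\<in>X. \<bar>p x - p x\<bar>)"
    using assms by (intro tendsto_intros) auto
  then show ?thesis by simp
qed

lemma Wlim:
  assumes "\<forall>x\<in>X. (\<lambda>k. P (r k) x) \<longlonglongrightarrow> p x"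
  shows "(\<lambda>k. Wf X u (P (r k)) y) \<longlonglongrightarrow> Wf X u p y"
  unfolding Wf_def using assms by (intro tendsto_intros) auto

lemma part1:
  assumes r: "strict_mono r" and p: "p \<in> mixed1 X" and q: "q \<in> mixed2 Y"
    and pc: "\<forall>x\<in>X. (\<lambda>k. P (r k) x) \<longlonglongrightarrow> p x" and wc: "weak_conv Y (\<lambda>k. Q (r k)) q"
  shows "mixed_NE X Y u p q"
proof -
  have lim: "(\<lambda>k. payoff X u (a k) (Q (r k))) \<longlonglongrightarrow> payoff X u a' q"
    if "\<forall>x\<in>X. (\<lambda>k. a k x) \<longlonglongrightarrow> a' x" for a a'
  proof -
    have "(\<lambda>k. \<integral>y. u x y \<partial>(Q (r k))) \<longlonglongrightarrow> (\<integral>y. u x y \<partial>q)" if "x \<in> X" for x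
      using wc cont cpt that unfolding weak_conv_def
      by (auto intro!: compact_imp_bounded compact_continuous_image)
    then show ?thesis unfolding payoff_def using that by (intro tendsto_intros) auto
  qed
  obtain K0 where K0: "\<forall>k\<ge>K0. xs (Suc k) \<in> Xs k" using stab by auto
  have rge: "k \<le> r k" for k using r by (rule seq_suble)
  have A: "payoff X u (pure1 x) q \<le> payoff X u p q" if x: "x \<in> X" for x
  proof (rule LIMSEQ_le[OF lim lim])
    show "\<forall>x\<in>X. (\<lambda>k. pure1 x' x) \<longlonglongrightarrow> pure1 x' x" for x' by auto
    show "\<forall>x\<in>X. (\<lambda>k. P (r k) x) \<longlonglongrightarrow> p x" by (rule pc)
    show "\<exists>N. \<forall>n\<ge>N. payoff X u (pure1 x) (Q (r n)) \<le> payoff X u (P (r n)) (Q (r n))"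
      using factA K0 rge x by (meson order_trans)
  qed
  have Bk: "payoff X u p q \<le> Wf X u p (ys (Suc (r k)))" for k
  proof (rule LIMSEQ_le[OF lim[OF pc] Wlim[OF pc]])
    show "\<exists>N. \<forall>n\<ge>N. payoff X u (P (r n)) (Q (r n)) \<le> Wf X u (P (r n)) (ys (Suc (r k)))"
    proof (intro exI allI impI)
      fix n assume "Suc k \<le> n"
      then have "r k < r n" using r by (simp add: strict_mono_less)
      then show "payoff X u (P (r n)) (Q (r n)) \<le> Wf X u (P (r n)) (ys (Suc (r k)))"
        by (intro factB ys_in)
    qed
  qed
  obtain B where B: "B > 0" "\<forall>x\<in>X. \<forall>y\<in>Y. \<bar>u x y\<bar> \<le> B" using bound by auto
  define d where "d k = (\<Sum>x\<in>X. \<bar>P (r k) x - p x\<bar>)" for k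
  have d: "d \<longlonglongrightarrow> 0" unfolding d_def using dlim[OF pc] .
  have dd: "\<bar>Wf X u p y - Wf X u (P (r k)) y\<bar> \<le> B * d k" if "y \<in> Y" for y k
    using Wf_diff[OF B(2) that, of p "P (r k)"] unfolding d_def by (simp add: abs_minus_commute)
  have C: "payoff X u p q \<le> Wf X u p y" if y: "y \<in> Y" for y
  proof (rule LIMSEQ_le_const)
    show "(\<lambda>k. Wf X u p y + 2 * B * d k) \<longlonglongrightarrow> Wf X u p y"
      using d by (auto intro!: tendsto_eq_intros)
    show "\<exists>N. \<forall>n\<ge>N. payoff X u p q \<le> Wf X u p y + 2 * B * d n"
    proof (intro exI allI impI)
      fix k :: nat
      let ?y = "ys (Suc (r k))"
      have y': "?y \<in> Y" using BR2D by auto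
      have "payoff X u p q \<le> Wf X u p ?y" by (rule Bk)
      also have "\<dots> \<le> Wf X u (P (r k)) ?y + B * d k" using dd[OF y', of k] by linarith
      also have "\<dots> \<le> Wf X u (P (r k)) y + B * d k" using BR2D(2)[of "r k"] y by auto
      also have "\<dots> \<le> Wf X u p y + 2 * B * d k" using dd[OF y, of k] by linarith
      finally show "payoff X u p q \<le> Wf X u p y + 2 * B * d k" .
    qed
  qed
  show ?thesis unfolding mixed_NE_def
  proof (intro conjI p q ballI)
    fix p' q' assume p': "p' \<in> mixed1 X" and q': "q' \<in> mixed2 Y"
    show "payoff X u p' q \<le> payoff X u p q" by (rule convex_le[OF p']) (use A in blast)
    show "payoff X u p q \<le> payoff X u p q'" by (rule meas_ge[OF q']) (use C in blast)
  qed
qed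

lemma part2:
  assumes eps: "\<epsilon> > 0"
  shows "\<exists>k. ccdo_stop X Y u \<epsilon> P Q xs ys k"
proof (rule ccontr)
  assume ns: "\<not> (\<exists>k. ccdo_stop X Y u \<epsilon> P Q xs ys k)"
  define v where "v k = payoff X u (P k) (Q k)" for k
  obtain K0 where K0: "\<forall>k\<ge>K0. xs (Suc k) \<in> Xs k" using stab by auto
  have gap: "Wf X u (P k) (ys (Suc k)) < v k - \<epsilon>" if "K0 \<le> k" for k
  proof -
    have "Wf X u (P k) (ys (Suc k)) < payoff X u (pure1 (xs (Suc k))) (Q k) - \<epsilon>"
    proof -
      have "\<not> ccdo_stop X Y u \<epsilon> P Q xs ys k" using ns by blast
      then show ?thesis unfolding ccdo_stop_def payoff_pure2[OF BR2D(1)[of k]] by linarith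
    qed
    moreover have "payoff X u (pure1 (xs (Suc k))) (Q k) \<le> v k"
      using factA[of k] K0 that BR1D(1)[of k] unfolding v_def by auto
    ultimately show ?thesis by linarith
  qed
  have P01: "\<forall>k. \<forall>x\<in>X. P k x \<in> {0..1}"
  proof (intro allI ballI)
    fix k x assume x: "x \<in> X"
    have "P k x \<le> sum (P k) X" using PQ(1)[of k] fin x
      by (intro member_le_sum) (auto simp: mixed1_def)
    then show "P k x \<in> {0..1}" using PQ(1)[of k] x by (auto simp: mixed1_def)
  qed
  obtain r p where r: "strict_mono r" and pc: "\<forall>x\<in>X. (\<lambda>k. P (r k) x) \<longlonglongrightarrow> p x"
    using subseq_conv[OF fin P01] by auto
  have rge: "k \<le> r k" for k using r by (rule seq_suble)
  obtain B where B: "B > 0" "\<forall>x\<in>X. \<forall>y\<in>Y. \<bar>u x y\<bar> \<le> B" using bound by auto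
  define d where "d k = (\<Sum>x\<in>X. \<bar>P (r k) x - p x\<bar>)" for k
  have d: "d \<longlonglongrightarrow> 0" unfolding d_def using dlim[OF pc] .
  have dd: "\<bar>Wf X u p y - Wf X u (P (r k)) y\<bar> \<le> B * d k" if "y \<in> Y" for y k
    using Wf_diff[OF B(2) that, of p "P (r k)"] unfolding d_def by (simp add: abs_minus_commute)
  have "eventually (\<lambda>k. d k < \<epsilon> / (4 * B)) sequentially"
    using d eps B(1) by (intro order_tendstoD(2)) auto
  then obtain N0 where N0: "\<forall>k\<ge>N0. d k < \<epsilon> / (4 * B)" by (auto simp: eventually_sequentially)
  have Bd: "B * d k < \<epsilon> / 4" if "N0 \<le> k" for k
  proof -
    have "B * d k < B * (\<epsilon> / (4 * B))" using N0 that B(1) by (intro mult_strict_left_mono) auto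
    then show ?thesis using B(1) by simp
  qed
  define N where "N = max N0 K0"
  have vb: "\<bar>v k\<bar> \<le> B" for k
  proof -
    have "\<forall>y\<in>Y. \<bar>Wf X u (P k) y\<bar> \<le> B" using Wf_bound[OF B(2) _ PQ(1)] by auto
    then have "-B \<le> v k" "v k \<le> B" unfolding v_def using PQ(2)[of k]
      by (auto intro!: meas_ge meas_le simp: abs_le_iff)
    then show ?thesis by auto
  qed
  have stepv: "v (r (N + Suc m)) < v (r (N + m)) - \<epsilon> / 2" for m
  proof -
    define i where "i = r (N + m)"
    define j where "j = r (N + Suc m)"
    have ij: "i < j" unfolding i_def j_def using r by (simp add: strict_mono_less)
    have "K0 \<le> N" by (simp add: N_def)
    then have iK: "K0 \<le> i" unfolding i_def using rge[of "N+m"] by linarith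
    let ?y = "ys (Suc i)"
    have y': "?y \<in> Y" using BR2D by auto
    have "v j \<le> Wf X u (P j) ?y" unfolding v_def using ij by (intro factB ys_in)
    also have "\<dots> \<le> Wf X u p ?y + B * d (N + Suc m)" using dd[OF y', of "N + Suc m"] unfolding j_def by linarith
    also have "\<dots> \<le> Wf X u (P i) ?y + B * d (N + m) + B * d (N + Suc m)"
      using dd[OF y', of "N + m"] unfolding i_def by linarith
    also have "\<dots> < v i - \<epsilon> + \<epsilon> / 4 + \<epsilon> / 4"
      using gap[OF iK] Bd[of "N + m"] Bd[of "N + Suc m"] unfolding N_def by linarith
    finally show ?thesis unfolding i_def j_def by linarith
  qed
  have ind: "v (r (N + m)) \<le> v (r N) - real m * (\<epsilon> / 2)" for m
  proof (induction m)
    case 0 then show ?case by simp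
  next
    case (Suc m)
    have "real (Suc m) * (\<epsilon> / 2) = real m * (\<epsilon> / 2) + \<epsilon> / 2" by (simp add: algebra_simps)
    then show ?case using Suc stepv[of m] by (simp only: add_Suc_right)
  qed
  obtain m :: nat where m: "(2 * B + 1) / (\<epsilon> / 2) < real m" using reals_Archimedean2 by blast
  then have "2 * B + 1 < real m * (\<epsilon> / 2)" using eps by (simp add: field_simps)
  moreover have "- B \<le> v (r (N + m))" "v (r N) \<le> B"
    using vb[of "r (N + m)"] vb[of "r N"] by (simp_all add: abs_le_iff)
  moreover have "v (r (N + m)) \<le> v (r N) - real m * (\<epsilon> / 2)" by (rule ind)
  ultimately show False by argo
qed

end

context game begin

lemma eps_final:
  assumes st: "ccdo_step X Y u Xs Ys P Q xs ys K" and stop: "ccdo_stop X Y u \<epsilon> P Q xs ys K"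
  shows "eps_NE X Y u \<epsilon> (P K) (Q K)"
proof -
  have NE: "subgame_NE X Y u (Xs K) (Ys K) (P K) (Q K)" and b1: "xs (Suc K) \<in> BR1 X u (Q K)"
    and b2: "ys (Suc K) \<in> BR2 X Y u (P K)" using st unfolding ccdo_step_def by auto
  have p: "P K \<in> mixed1 X" and q: "Q K \<in> mixed2 Y" using NE unfolding subgame_NE_def by auto
  define a where "a = payoff X u (pure1 (xs (Suc K))) (Q K)"
  define b where "b = Wf X u (P K) (ys (Suc K))"
  have yY: "ys (Suc K) \<in> Y" and bmin: "\<forall>y\<in>Y. b \<le> Wf X u (P K) y"
    using b2 unfolding BR2_def b_def by (auto simp: payoff_pure2)
  have amax: "\<forall>x\<in>X. payoff X u (pure1 x) (Q K) \<le> a" using b1 unfolding BR1_def a_def by auto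
  have ab: "a - b \<le> \<epsilon>" using stop yY unfolding ccdo_stop_def a_def b_def by (simp add: payoff_pure2)
  have va: "payoff X u (P K) (Q K) \<le> a" using convex_le[OF p amax] .
  have vb: "b \<le> payoff X u (P K) (Q K)" using meas_ge[OF q bmin] .
  show ?thesis unfolding eps_NE_def
  proof (intro conjI p q ballI)
    fix p' q' assume p': "p' \<in> mixed1 X" and q': "q' \<in> mixed2 Y"
    have "payoff X u p' (Q K) \<le> a" using convex_le[OF p' amax] .
    moreover have "b \<le> payoff X u (P K) q'" using meas_ge[OF q' bmin] .
    ultimately show "payoff X u p' (Q K) - \<epsilon> \<le> payoff X u (P K) (Q K)"
      "payoff X u (P K) (Q K) \<le> payoff X u (P K) q' + \<epsilon>" using ab va vb by linarith+
  qed
qed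

end

theorem theorem2:
  fixes X :: "'a set" and Y :: "'b::metric_space set" and u :: "'a \<Rightarrow> 'b \<Rightarrow> real"
    and \<epsilon> :: real
  assumes "finite X" and "X \<noteq> {}" and "compact Y" and "Y \<noteq> {}"
    and "\<forall>x\<in>X. continuous_on Y (u x)" and "\<epsilon> \<ge> 0"
  shows
   "(\<epsilon> = 0 \<longrightarrow>
      (\<forall>Xs Ys P Q xs ys.
         ccdo_init X Y Xs Ys \<and>
         (\<forall>k. ccdo_step X Y u Xs Ys P Q xs ys k \<and> \<not> ccdo_stop X Y u \<epsilon> P Q xs ys k) \<longrightarrow>
         (\<forall>r p q. strict_mono r \<and> p \<in> mixed1 X \<and> q \<in> mixed2 Y \<and>
              (\<forall>x\<in>X. (\<lambda>k. P (r k) x) \<longlonglongrightarrow> p x) \<and> weak_conv Y (\<lambda>k. Q (r k)) q \<longrightarrow>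
              mixed_NE X Y u p q)))
    \<and>
    (\<epsilon> > 0 \<longrightarrow>
      (\<forall>Xs Ys P Q xs ys.
         ccdo_init X Y Xs Ys \<and>
         (\<forall>k. (\<forall>j<k. \<not> ccdo_stop X Y u \<epsilon> P Q xs ys j) \<longrightarrow> ccdo_step X Y u Xs Ys P Q xs ys k) \<longrightarrow>
         (\<exists>K. ccdo_stop X Y u \<epsilon> P Q xs ys K \<and> (\<forall>j<K. \<not> ccdo_stop X Y u \<epsilon> P Q xs ys j) \<and>
              eps_NE X Y u \<epsilon> (P K) (Q K))))"
proof -
  interpret game X Y u using assms by unfold_locales auto
  have part1': "mixed_NE X Y u p q"
    if H: "ccdo_init X Y Xs Ys" "\<forall>k. ccdo_step X Y u Xs Ys P Q xs ys k"
      and R: "strict_mono r" "p \<in> mixed1 X" "q \<in> mixed2 Y"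
        "\<forall>x\<in>X. (\<lambda>k. P (r k) x) \<longlonglongrightarrow> p x" "weak_conv Y (\<lambda>k. Q (r k)) q"
    for Xs Ys P Q xs ys r p q
  proof -
    interpret run X Y u Xs Ys P Q xs ys by unfold_locales (use assms H in auto)
    show ?thesis using R by (rule part1)
  qed
  have part2': "\<exists>K. ccdo_stop X Y u \<epsilon> P Q xs ys K \<and> (\<forall>j<K. \<not> ccdo_stop X Y u \<epsilon> P Q xs ys j) \<and>
              eps_NE X Y u \<epsilon> (P K) (Q K)"
    if eps: "\<epsilon> > 0" and H: "ccdo_init X Y Xs Ys"
      "\<forall>k. (\<forall>j<k. \<not> ccdo_stop X Y u \<epsilon> P Q xs ys j) \<longrightarrow> ccdo_step X Y u Xs Ys P Q xs ys k"
    for Xs Ys P Q xs ys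
  proof -
    have ex: "\<exists>k. ccdo_stop X Y u \<epsilon> P Q xs ys k"
    proof (rule ccontr)
      assume ns: "\<not> (\<exists>k. ccdo_stop X Y u \<epsilon> P Q xs ys k)"
      interpret run X Y u Xs Ys P Q xs ys by unfold_locales (use assms H ns in auto)
      show False using ns part2[OF eps] by blast
    qed
    define K where "K = (LEAST k. ccdo_stop X Y u \<epsilon> P Q xs ys k)"
    have sK: "ccdo_stop X Y u \<epsilon> P Q xs ys K" unfolding K_def using ex by (rule LeastI_ex)
    have bK: "\<forall>j<K. \<not> ccdo_stop X Y u \<epsilon> P Q xs ys j" unfolding K_def using not_less_Least by blast
    have "ccdo_step X Y u Xs Ys P Q xs ys K" using H(2) bK by blast
    then have "eps_NE X Y u \<epsilon> (P K) (Q K)" using sK by (rule eps_final)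
    then show ?thesis using sK bK by blast
  qed
  have G1: "\<forall>Xs Ys P Q xs ys.
         ccdo_init X Y Xs Ys \<and>
         (\<forall>k. ccdo_step X Y u Xs Ys P Q xs ys k \<and> \<not> ccdo_stop X Y u \<epsilon> P Q xs ys k) \<longrightarrow>
         (\<forall>r p q. strict_mono r \<and> p \<in> mixed1 X \<and> q \<in> mixed2 Y \<and>
              (\<forall>x\<in>X. (\<lambda>k. P (r k) x) \<longlonglongrightarrow> p x) \<and> weak_conv Y (\<lambda>k. Q (r k)) q \<longrightarrow>
              mixed_NE X Y u p q)"
  proof (intro allI impI)
    fix Xs Ys P Q xs ys r p q
    assume H: "ccdo_init X Y Xs Ys \<and>
         (\<forall>k. ccdo_step X Y u Xs Ys P Q xs ys k \<and> \<not> ccdo_stop X Y u \<epsilon> P Q xs ys k)"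
      and R: "strict_mono r \<and> p \<in> mixed1 X \<and> q \<in> mixed2 Y \<and>
              (\<forall>x\<in>X. (\<lambda>k. P (r k) x) \<longlonglongrightarrow> p x) \<and> weak_conv Y (\<lambda>k. Q (r k)) q"
    have H1: "ccdo_init X Y Xs Ys" and H2: "\<forall>k. ccdo_step X Y u Xs Ys P Q xs ys k"
      using H by simp_all
    from R have R1: "strict_mono r" and R2: "p \<in> mixed1 X" and R3: "q \<in> mixed2 Y"
      and R4: "\<forall>x\<in>X. (\<lambda>k. P (r k) x) \<longlonglongrightarrow> p x" and R5: "weak_conv Y (\<lambda>k. Q (r k)) q"
      by simp_all
    show "mixed_NE X Y u p q" by (rule part1'[OF H1 H2 R1 R2 R3 R4 R5])
  qed
  have G2: "\<epsilon> > 0 \<longrightarrow>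
      (\<forall>Xs Ys P Q xs ys.
         ccdo_init X Y Xs Ys \<and>
         (\<forall>k. (\<forall>j<k. \<not> ccdo_stop X Y u \<epsilon> P Q xs ys j) \<longrightarrow> ccdo_step X Y u Xs Ys P Q xs ys k) \<longrightarrow>
         (\<exists>K. ccdo_stop X Y u \<epsilon> P Q xs ys K \<and> (\<forall>j<K. \<not> ccdo_stop X Y u \<epsilon> P Q xs ys j) \<and>
              eps_NE X Y u \<epsilon> (P K) (Q K)))"
  proof (intro allI impI)
    fix Xs Ys P Q xs ys
    assume e: "\<epsilon> > 0" and H: "ccdo_init X Y Xs Ys \<and>
         (\<forall>k. (\<forall>j<k. \<not> ccdo_stop X Y u \<epsilon> P Q xs ys j) \<longrightarrow> ccdo_step X Y u Xs Ys P Q xs ys k)"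
    from H have H1: "ccdo_init X Y Xs Ys"
      and H2: "\<forall>k. (\<forall>j<k. \<not> ccdo_stop X Y u \<epsilon> P Q xs ys j) \<longrightarrow> ccdo_step X Y u Xs Ys P Q xs ys k"
      by simp_all
    show "\<exists>K. ccdo_stop X Y u \<epsilon> P Q xs ys K \<and> (\<forall>j<K. \<not> ccdo_stop X Y u \<epsilon> P Q xs ys j) \<and>
              eps_NE X Y u \<epsilon> (P K) (Q K)" by (rule part2'[OF e H1 H2])
  qed
  show ?thesis
    apply (rule conjI)
     apply (rule impI)
     apply (rule G1)
    apply (rule G2)
    done
qed

end
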